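(* Let $(X,\mathcal{A},\mu)$ be a $q$-measure space, let $A_1,\dots,A_n\in\mathcal{A}$ be mutually disjoint, let $0<\alpha_1<\alpha_2<\dots<\alpha_n$, and let $f=\sum_{i=1}^n\alpha_i\chi_{A_i}$. Then \[ \int f\,d\mu=\sum_{k=1}^{n-1}\alpha_k\Big[\sum_{j=k+1}^n\mu(A_k\cup A_j)-(n-k-1)\mu(A_k)-\sum_{j=k+1}^n\mu(A_j)\Big]+\alpha_n\mu(A_n). \] Equivalently, with $\alpha_0=0$, $\int f\,d\mu=\sum_{k=1}^n(\alpha_k-\alpha_{k-1})\,\mu(A_k\cup\dots\cup A_n)$.
   Context: A $q$-measure space is a triple $(X,\mathcal{A},\mu)$ where $\mathcal{A}$ is a $\sigma$-algebra of subsets of $X$ and $\mu\colon\mathcal{A}\to[0,\infty)$ satisfies: (i) grade-2 additivity: $\mu(A\cup B\cup C)=\mu(A\cup B)+\mu(A\cup C)+\mu(B\cup C)-\mu(A)-\mu(B)-\mu(C)$ for mutually disjoint $A,B,C\in\mathcal{A}$; (ii) if $A_i\in\mathcal{A}$ is increasing then $\mu(\bigcup A_i)=\lim\mu(A_i)$; (iii) if $A_i\in\mathcal{A}$ is decreasing then $\mu(\bigcap A_i)=\lim\mu(A_i)$. $\chi_A$ denotes the characteristic function of $A$. For measurable $f\colon X\to\mathbb{R}$, $f$ is called $\mu$-integrable if $\lambda\mapsto\mu(f^{-1}(\lambda,\infty))$ and $\lambda\mapsto\mu(f^{-1}(-\infty,-\lambda))$ have finite Lebesgue integral over $[0,\infty)$,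 and then the $q$-integral is $\int f\,d\mu=\int_0^\infty\mu(f^{-1}(\lambda,\infty))\,d\lambda-\int_0^\infty\mu(f^{-1}(-\infty,-\lambda))\,d\lambda$. *)

theory Defs
  imports "HOL-Analysis.Analysis"
begin

definition q_measure_space :: "'a set \<Rightarrow> 'a set set \<Rightarrow> ('a set \<Rightarrow> real) \<Rightarrow> bool" where
  "q_measure_space X \<A> \<mu> \<longleftrightarrow>
     sigma_algebra X \<A> \<and>
     (\<forall>A\<in>\<A>. 0 \<le> \<mu> A) \<and>
     (\<forall>A\<in>\<A>. \<forall>B\<in>\<A>. \<forall>C\<in>\<A>. A \<inter> B = {} \<and> A \<inter> C = {} \<and> B \<inter> C = {} \<longrightarrow>
        \<mu> (A \<union> B \<union> C) = \<mu> (A \<union> B) + \<mu> (A \<union> C) + \<mu> (B \<union> C) - \<mu> A - \<mu> B - \<mu> C) \<and>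
     (\<forall>S::nat \<Rightarrow> 'a set. range S \<subseteq> \<A> \<and> incseq S \<longrightarrow> (\<lambda>i. \<mu> (S i)) \<longlonglongrightarrow> \<mu> (\<Union>i. S i)) \<and>
     (\<forall>S::nat \<Rightarrow> 'a set. range S \<subseteq> \<A> \<and> decseq S \<longrightarrow> (\<lambda>i. \<mu> (S i)) \<longlonglongrightarrow> \<mu> (\<Inter>i. S i))"

definition q_measurable :: "'a set \<Rightarrow> 'a set set \<Rightarrow> ('a \<Rightarrow> real) \<Rightarrow> bool" where
  "q_measurable X \<A> f \<longleftrightarrow> (\<forall>B\<in>sets borel. {x\<in>X. f x \<in> B} \<in> \<A>)"

definition q_pos_part :: "'a set \<Rightarrow> ('a set \<Rightarrow> real) \<Rightarrow> ('a \<Rightarrow> real) \<Rightarrow> real \<Rightarrow> real" where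
  "q_pos_part X \<mu> f = (\<lambda>t. \<mu> {x\<in>X. f x > t})"

definition q_neg_part :: "'a set \<Rightarrow> ('a set \<Rightarrow> real) \<Rightarrow> ('a \<Rightarrow> real) \<Rightarrow> real \<Rightarrow> real" where
  "q_neg_part X \<mu> f = (\<lambda>t. \<mu> {x\<in>X. f x < - t})"

definition q_integrable :: "'a set \<Rightarrow> 'a set set \<Rightarrow> ('a set \<Rightarrow> real) \<Rightarrow> ('a \<Rightarrow> real) \<Rightarrow> bool" where
  "q_integrable X \<A> \<mu> f \<longleftrightarrow> q_measurable X \<A> f \<and>
     set_integrable lborel {0..} (q_pos_part X \<mu> f) \<and>
     set_integrable lborel {0..} (q_neg_part X \<mu> f)"

definition q_integral :: "'a set \<Rightarrow> ('a set \<Rightarrow> real) \<Rightarrow> ('a \<Rightarrow> real) \<Rightarrow> real" where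
  "q_integral X \<mu> f =
     (LINT t:{0..}|lborel. q_pos_part X \<mu> f t) - (LINT t:{0..}|lborel. q_neg_part X \<mu> f t)"

end

theory Submission imports Defs begin
lemma qm_empty:
  assumes "q_measure_space X \<A> \<mu>" shows "\<mu> {} = 0"
proof -
  have s: "sigma_algebra X \<A>" using assms unfolding q_measure_space_def by blast
  then interpret sigma_algebra X \<A> .
  have e: "{} \<in> \<A>" by simp
  have "\<mu> ({} \<union> {} \<union> {}) = \<mu> ({} \<union> {}) + \<mu> ({} \<union> {}) + \<mu> ({} \<union> {}) - \<mu> {} - \<mu> {} - \<mu> {}"
    using assms e unfolding q_measure_space_def by blast
  thus ?thesis by simp
qed

lemma qm_union:
  assumes q: "q_measure_space X \<A> \<mu>" and fin: "finite J" and B: "B \<in> \<A>"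
    and C: "\<forall>j\<in>J. C j \<in> \<A>" and BC: "\<forall>j\<in>J. B \<inter> C j = {}"
    and CC: "\<forall>i\<in>J. \<forall>j\<in>J. i \<noteq> j \<longrightarrow> C i \<inter> C j = {}"
  shows "\<mu> (B \<union> (\<Union>j\<in>J. C j)) - \<mu> (\<Union>j\<in>J. C j)
    = (\<Sum>j\<in>J. \<mu> (B \<union> C j)) - (real (card J) - 1) * \<mu> B - (\<Sum>j\<in>J. \<mu> (C j))"
  using fin C BC CC
proof (induction J rule: finite_induct)
  case empty
  then show ?case using qm_empty[OF q] by simp
next
  case (insert c J)
  have s: "sigma_algebra X \<A>" using q unfolding q_measure_space_def by blast
  then interpret sigma_algebra X \<A> .
  let ?W = "\<Union>j\<in>J. C j"
  have W: "?W \<in> \<A>" using insert by auto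
  have Cc: "C c \<in> \<A>" using insert by auto
  have d1: "B \<inter> C c = {}" "B \<inter> ?W = {}" "C c \<inter> ?W = {}" using insert by auto
  have g: "\<mu> (B \<union> C c \<union> ?W) = \<mu> (B \<union> C c) + \<mu> (B \<union> ?W) + \<mu> (C c \<union> ?W) - \<mu> B - \<mu> (C c) - \<mu> ?W"
    using q B Cc W d1 unfolding q_measure_space_def by blast
  have IH: "\<mu> (B \<union> ?W) - \<mu> ?W = (\<Sum>j\<in>J. \<mu> (B \<union> C j)) - (real (card J) - 1) * \<mu> B - (\<Sum>j\<in>J. \<mu> (C j))"
    using insert by auto
  have e1: "B \<union> (\<Union>j\<in>insert c J. C j) = B \<union> C c \<union> ?W" by auto
  have e2: "(\<Union>j\<in>insert c J. C j) = C c \<union> ?W" by auto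
  show ?case unfolding e1 e2 using g IH insert.hyps by (simp add: algebra_simps Un_assoc)
qed

lemma telesc: "m \<le> Suc n \<Longrightarrow> (\<Sum>k=m..n. (F k - F (Suc k)) :: real) = F m - F (Suc n)"
proof (induction n arbitrary: m)
  case 0
  then show ?case by (cases m) auto
next
  case (Suc n)
  show ?case
  proof (cases "m = Suc (Suc n)")
    case True then show ?thesis by simp
  next
    case False
    then have "m \<le> Suc n" using Suc.prems by simp
    then show ?thesis using Suc.IH[of m] by (simp add: sum.cl_ivl_Suc)
  qed
qed

theorem lemma4p2:
  fixes X :: "'a set" and \<A> :: "'a set set" and \<mu> :: "'a set \<Rightarrow> real"
    and n :: nat and A :: "nat \<Rightarrow> 'a set" and \<alpha> :: "nat \<Rightarrow> real" and f :: "'a \<Rightarrow> real"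
  assumes "q_measure_space X \<A> \<mu>"
    and "n \<ge> 1"
    and "\<forall>i\<in>{1..n}. A i \<in> \<A>"
    and "\<forall>i\<in>{1..n}. \<forall>j\<in>{1..n}. i \<noteq> j \<longrightarrow> A i \<inter> A j = {}"
    and "0 < \<alpha> 1"
    and "\<forall>k\<in>{1..<n}. \<alpha> k < \<alpha> (Suc k)"
    and "f = (\<lambda>x. \<Sum>i=1..n. \<alpha> i * indicator (A i) x)"
  shows "q_integrable X \<A> \<mu> f \<and>
    q_integral X \<mu> f =
      (\<Sum>k=1..n-1. \<alpha> k * ((\<Sum>j=k+1..n. \<mu> (A k \<union> A j)) - real (n - k - 1) * \<mu> (A k)
                              - (\<Sum>j=k+1..n. \<mu> (A j))))
      + \<alpha> n * \<mu> (A n)"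
proof -
  note q = assms(1)
  have s: "sigma_algebra X \<A>" using q unfolding q_measure_space_def by blast
  then interpret sigma_algebra X \<A> .
  have Ain: "\<And>i. 1 \<le> i \<Longrightarrow> i \<le> n \<Longrightarrow> A i \<in> \<A>" using assms(3) by auto
  have AX: "\<And>i. 1 \<le> i \<Longrightarrow> i \<le> n \<Longrightarrow> A i \<subseteq> X" using Ain sets_into_space by blast
  have disj: "\<And>i j. 1 \<le> i \<Longrightarrow> i \<le> n \<Longrightarrow> 1 \<le> j \<Longrightarrow> j \<le> n \<Longrightarrow> i \<noteq> j \<Longrightarrow> A i \<inter> A j = {}"
    using assms(4) by auto
  have mono: "\<And>i j. 1 \<le> i \<Longrightarrow> i < j \<Longrightarrow> j \<le> n \<Longrightarrow> \<alpha> i < \<alpha> j"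
  proof -
    fix i j :: nat
    show "1 \<le> i \<Longrightarrow> i < j \<Longrightarrow> j \<le> n \<Longrightarrow> \<alpha> i < \<alpha> j"
    proof (induction j)
      case 0 then show ?case by simp
    next
      case (Suc j)
      have st: "\<alpha> j < \<alpha> (Suc j)" using assms(6) Suc.prems by auto
      show ?case
      proof (cases "i = j")
        case True then show ?thesis using st by simp
      next
        case False then show ?thesis using Suc st by auto
      qed
    qed
  qed
  have mono_le: "\<And>i j. 1 \<le> i \<Longrightarrow> i \<le> j \<Longrightarrow> j \<le> n \<Longrightarrow> \<alpha> i \<le> \<alpha> j"
    using mono by (metis order.order_iff_strict order.refl)
  have apos: "\<And>i. 1 \<le> i \<Longrightarrow> i \<le> n \<Longrightarrow> 0 < \<alpha> i"
    using mono_le assms(5) by (meson less_le_trans order.refl)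
  have fval: "\<And>x i. 1 \<le> i \<Longrightarrow> i \<le> n \<Longrightarrow> x \<in> A i \<Longrightarrow> f x = \<alpha> i"
  proof -
    fix x i assume i: "1 \<le> i" "i \<le> n" and x: "x \<in> A i"
    have "f x = \<alpha> i * indicator (A i) x + (\<Sum>j\<in>{1..n}-{i}. \<alpha> j * indicator (A j) x)"
      unfolding assms(7) using i by (subst sum.remove[of "{1..n}" i]) auto
    also have "(\<Sum>j\<in>{1..n}-{i}. \<alpha> j * indicator (A j) x) = 0"
      using disj[of i] i x by (intro sum.neutral) (auto simp: indicator_def, blast)
    finally show "f x = \<alpha> i" using x by simp
  qed
  have fzero: "\<And>x. (\<forall>i\<in>{1..n}. x \<notin> A i) \<Longrightarrow> f x = 0"
    unfolding assms(7) by (intro sum.neutral) (auto simp: indicator_def)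
  have fnn: "0 \<le> f x" for x
  proof (cases "\<exists>i\<in>{1..n}. x \<in> A i")
    case True
    then obtain i where "i \<in> {1..n}" "x \<in> A i" by blast
    then have "f x = \<alpha> i" "0 < \<alpha> i" using fval apos by auto
    then show ?thesis by simp
  next
    case False then show ?thesis using fzero by simp
  qed
  define W where "W k = (\<Union>j\<in>{k..n}. A j)" for k
  have Win: "\<And>k. 1 \<le> k \<Longrightarrow> W k \<in> \<A>" unfolding W_def using Ain by auto
  have Wempty: "W (Suc n) = {}" unfolding W_def by auto
  define K where "K t = (LEAST j. 1 \<le> j \<and> (n < j \<or> t < \<alpha> j))" for t
  have K: "\<And>t. 1 \<le> K t \<and> K t \<le> Suc n \<and> (\<forall>j. 1 \<le> j \<longrightarrow> j \<le> n \<longrightarrow> (t < \<alpha> j \<longleftrightarrow> K t \<le> j))"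
  proof -
    fix t
    have P: "1 \<le> Suc n \<and> (n < Suc n \<or> t < \<alpha> (Suc n))" by simp
    have PK: "1 \<le> K t \<and> (n < K t \<or> t < \<alpha> (K t))"
      unfolding K_def by (rule LeastI[of _ "Suc n"]) (use P in blast)
    have le: "\<And>j. 1 \<le> j \<and> (n < j \<or> t < \<alpha> j) \<Longrightarrow> K t \<le> j"
      unfolding K_def by (rule Least_le)
    show "?thesis t"
    proof (intro conjI allI impI)
      show "1 \<le> K t" using PK by simp
      show "K t \<le> Suc n" using le P by blast
    next
      fix j assume j: "1 \<le> j" "j \<le> n"
      show "t < \<alpha> j \<longleftrightarrow> K t \<le> j"
      proof
        assume "t < \<alpha> j" then show "K t \<le> j" using le j by blast
      next
        assume kj: "K t \<le> j"
        then have "t < \<alpha> (K t)" using PK j by auto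
        also have "\<alpha> (K t) \<le> \<alpha> j" using mono_le PK kj j by blast
        finally show "t < \<alpha> j" .
      qed
    qed
  qed
  have level: "\<And>t. 0 \<le> t \<Longrightarrow> {x\<in>X. t < f x} = W (K t)"
  proof -
    fix t :: real assume t: "0 \<le> t"
    show "{x\<in>X. t < f x} = W (K t)"
    proof (intro set_eqI iffI)
      fix x assume x: "x \<in> {x\<in>X. t < f x}"
      then obtain i where i: "i \<in> {1..n}" "x \<in> A i" using fzero t by fastforce
      then have "t < \<alpha> i" using fval x by auto
      then have "K t \<le> i" using K i by auto
      then show "x \<in> W (K t)" using i unfolding W_def by auto
    next
      fix x assume "x \<in> W (K t)"
      then obtain j where j: "K t \<le> j" "j \<le> n" "x \<in> A j" unfolding W_def by auto
      have j1: "1 \<le> j" using K[of t] j by linarith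
      have "t < \<alpha> j" using K[of t] j j1 by blast
      then show "x \<in> {x\<in>X. t < f x}" using fval[OF j1 j(2) j(3)] AX[OF j1 j(2)] j by auto
    qed
  qed
  define c where "c k = \<mu> (W k) - \<mu> (W (Suc k))" for k
  define h where "h t = (\<Sum>k=1..n. c k * indicator {0..<\<alpha> k} t)" for t
  have pos_eq: "\<And>t. indicator {0..} t *\<^sub>R q_pos_part X \<mu> f t = h t"
  proof -
    fix t :: real
    show "indicator {0..} t *\<^sub>R q_pos_part X \<mu> f t = h t"
    proof (cases "0 \<le> t")
      case False
      then show ?thesis unfolding h_def by (auto simp: indicator_def intro!: sum.neutral)
    next
      case True
      have "h t = (\<Sum>k\<in>{1..n}. if K t \<le> k then c k else 0)"
        unfolding h_def using K[of t] True by (intro sum.cong) (auto simp: indicator_def)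
      also have "\<dots> = (\<Sum>k\<in>{1..n} \<inter> {k. K t \<le> k}. c k)"
        by (simp add: sum.inter_restrict)
      also have "{1..n} \<inter> {k. K t \<le> k} = {K t..n}" using K[of t] by auto
      also have "(\<Sum>k\<in>{K t..n}. c k) = \<mu> (W (K t)) - \<mu> (W (Suc n))"
        unfolding c_def using K[of t] by (intro telesc) auto
      also have "\<dots> = \<mu> (W (K t))" using Wempty qm_empty[OF q] by simp
      finally show ?thesis using True level[OF True] by (simp add: q_pos_part_def)
    qed
  qed
  have neg_eq: "\<And>t. indicator {0..} t *\<^sub>R q_neg_part X \<mu> f t = 0"
  proof -
    fix t :: real
    show "indicator {0..} t *\<^sub>R q_neg_part X \<mu> f t = 0"
    proof (cases "0 \<le> t")
      case True
      have em: "{x\<in>X. f x < - t} = {}" using fnn True by (auto simp: not_less) (smt (verit) fnn)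
      show ?thesis unfolding q_neg_part_def em qm_empty[OF q] by simp
    qed auto
  qed
  have hint: "integrable lborel h"
    unfolding h_def
    apply (rule Bochner_Integration.integrable_sum)
    apply (rule integrable_mult_right)
    apply (rule integrable_real_indicator)
    using apos by (auto simp: less_imp_le)
  have hval: "integral\<^sup>L lborel h = (\<Sum>k=1..n. c k * \<alpha> k)"
    unfolding h_def
    apply (subst Bochner_Integration.integral_sum)
    subgoal for k apply (rule integrable_mult_right) apply (rule integrable_real_indicator)
      using apos by (auto simp: less_imp_le)
    apply (rule sum.cong, rule refl)
    using apos by (simp add: less_imp_le mult.commute)
  have meas: "q_measurable X \<A> f"
    unfolding q_measurable_def
  proof
    fix B :: "real set"
    have "{x\<in>X. f x \<in> B} = (if 0 \<in> B then X - W 1 else {}) \<union> (\<Union>j\<in>{j\<in>{1..n}. \<alpha> j \<in> B}. A j)"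
    proof (intro set_eqI iffI)
      fix x assume x: "x \<in> {x\<in>X. f x \<in> B}"
      show "x \<in> (if 0 \<in> B then X - W 1 else {}) \<union> (\<Union>j\<in>{j\<in>{1..n}. \<alpha> j \<in> B}. A j)"
      proof (cases "\<exists>i\<in>{1..n}. x \<in> A i")
        case True
        then obtain i where "i \<in> {1..n}" "x \<in> A i" by blast
        then show ?thesis using fval x by auto
      next
        case False
        then show ?thesis using fzero x unfolding W_def by auto
      qed
    next
      fix x assume x: "x \<in> (if 0 \<in> B then X - W 1 else {}) \<union> (\<Union>j\<in>{j\<in>{1..n}. \<alpha> j \<in> B}. A j)"
      show "x \<in> {x\<in>X. f x \<in> B}"
      proof (cases "x \<in> (\<Union>j\<in>{j\<in>{1..n}. \<alpha> j \<in> B}. A j)")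
        case True
        then obtain j where "j \<in> {1..n}" "\<alpha> j \<in> B" "x \<in> A j" by blast
        then show ?thesis using fval AX by auto
      next
        case False
        then have "0 \<in> B" "x \<in> X - W 1" using x by (auto split: if_splits)
        then show ?thesis using fzero unfolding W_def by auto
      qed
    qed
    also have "\<dots> \<in> \<A>" using Win[of 1] Ain by auto
    finally show "{x\<in>X. f x \<in> B} \<in> \<A>" .
  qed
  have posf: "(\<lambda>t. indicator {0..} t *\<^sub>R q_pos_part X \<mu> f t) = h" using pos_eq by (intro ext) simp
  have negf: "(\<lambda>t. indicator {0..} t *\<^sub>R q_neg_part X \<mu> f t) = (\<lambda>_. 0)" using neg_eq by (intro ext) simp
  have integ: "q_integrable X \<A> \<mu> f"
    unfolding q_integrable_def set_integrable_def posf negf using meas hint by simp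
  have ival: "q_integral X \<mu> f = (\<Sum>k=1..n. c k * \<alpha> k)"
    unfolding q_integral_def set_lebesgue_integral_def posf negf using hval by simp
  obtain m where m: "n = Suc m" using assms(2) by (cases n) auto
  have cn: "c n = \<mu> (A n)"
    unfolding c_def using Wempty qm_empty[OF q] by (simp add: W_def)
  have ck: "c k * \<alpha> k = \<alpha> k * ((\<Sum>j=k+1..n. \<mu> (A k \<union> A j)) - real (n - k - 1) * \<mu> (A k)
                              - (\<Sum>j=k+1..n. \<mu> (A j)))" if k: "k \<in> {1..m}" for k
  proof -
    have k1: "1 \<le> k" "k < n" using k m by auto
    have u: "\<mu> (A k \<union> (\<Union>j\<in>{k+1..n}. A j)) - \<mu> (\<Union>j\<in>{k+1..n}. A j)
      = (\<Sum>j\<in>{k+1..n}. \<mu> (A k \<union> A j)) - (real (card {k+1..n}) - 1) * \<mu> (A k) - (\<Sum>j\<in>{k+1..n}. \<mu> (A j))"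
    proof (rule qm_union[OF q])
      show "\<forall>j\<in>{k+1..n}. A k \<inter> A j = {}" using k1 disj[of k] by auto
      show "\<forall>i\<in>{k+1..n}. \<forall>j\<in>{k+1..n}. i \<noteq> j \<longrightarrow> A i \<inter> A j = {}" using k1 disj by auto
    qed (use k1 Ain in auto)
    have ins: "{k..n} = insert k {k+1..n}" using k1 by auto
    have e1: "W k = A k \<union> (\<Union>j\<in>{k+1..n}. A j)" unfolding W_def ins by simp
    have e2: "W (Suc k) = (\<Union>j\<in>{k+1..n}. A j)" unfolding W_def by simp
    have cd: "real (card {k+1..n}) - 1 = real (n - k - 1)" using k1 by simp
    show ?thesis unfolding c_def e1 e2 u cd[symmetric] by simp
  qed
  have "(\<Sum>k=1..n. c k * \<alpha> k) = (\<Sum>k=1..m. c k * \<alpha> k) + c n * \<alpha> n"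
    unfolding m by (simp add: sum.cl_ivl_Suc)
  also have "(\<Sum>k=1..m. c k * \<alpha> k) = (\<Sum>k=1..n-1. \<alpha> k * ((\<Sum>j=k+1..n. \<mu> (A k \<union> A j)) - real (n - k - 1) * \<mu> (A k)
                              - (\<Sum>j=k+1..n. \<mu> (A j))))"
    using ck m by (intro sum.cong) auto
  finally show ?thesis using integ ival cn by simp
qed

end
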